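(* Let $M$ be a finite-dimensional vector space, $[\cdot,\cdot]_M\colon M\times M\to M$ a symmetric bilinear map and $\alpha_M\colon M\to M$ a linear map. Suppose $M=V\oplus J$ for subspaces $J,V$ that are invariant under $\alpha_M$, with $[M,V]_M\subseteq V$, and suppose that $(V,[\cdot,\cdot]_V,\beta)$ is a Hom-Jacobi-Jordan algebra, where $\beta=\alpha_M|_V$ and $[\cdot,\cdot]_V$ is the restriction of $[\cdot,\cdot]_M$ to $V\times V$. Let $\alpha_J=\alpha_M|_J$, let $[\cdot,\cdot]_J\colon J\times J\to J$ and $\theta\colon J\times J\to V$ be the components in $J$ and in $V$ of the restriction of $[\cdot,\cdot]_M$ to $J\times J$ (so $[x,y]_M=[x,y]_J+\theta(x,y)$), and define $\rho\colon J\to\mathrm{End}(V)$ by $\rho(x)v=[x,v]_M$. Then $(M,[\cdot,\cdot]_M,\alpha_M)$ is a Hom-Jacobi-Jordan algebra if and only if (1) $(J,[\cdot,\cdot]_J,\alpha_J)$ is a Hom-Jacobi-Jordan algebra and (2) $(\rho,\theta)$ is a $2$-cocycle of $J$ with values in $V$.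
   Context: A Hom-Jacobi-Jordan algebra is a triple $(A,[\cdot,\cdot],\gamma)$ with $A$ a vector space, $[\cdot,\cdot]$ a symmetric bilinear map $A\times A\to A$ and $\gamma\colon A\to A$ linear such that $\gamma([x,y])=[\gamma(x),\gamma(y)]$ and $[\gamma(x),[y,z]]+[\gamma(y),[z,x]]+[\gamma(z),[x,y]]=0$ for all $x,y,z\in A$. Given Hom-Jacobi-Jordan algebras $(J,[\cdot,\cdot],\alpha)$ and $(V,[\cdot,\cdot]_V,\beta)$, a $2$-cocycle of $J$ with values in $V$ is a pair $(\rho,\theta)$ where $\rho\colon J\to\mathrm{End}(V)$ is linear and $\theta\colon J\times J\to V$ is symmetric bilinear with $\beta(\theta(x,y))=\theta(\alpha(x),\alpha(y))$, such that for all $x,y,z\in J$, $u,v\in V$: (i) $\rho(\alpha(x))\circ\beta=\beta\circ\rho(x)$; (ii) $\rho([x,y])\beta(v)=-\rho(\alpha(x))\rho(y)v-\rho(\alpha(y))\rho(x)v-[\theta(x,y),\beta(v)]_V$; (iii) $\theta(\alpha(x),[y,z])+\theta(\alpha(y),[x,z])+\theta(\alpha(z),[x,y])+\rho(\alpha(x))\theta(y,z)+\rho(\alpha(y))\theta(x,z)+\rho(\alpha(z))\theta(x,y)=0$; (iv) $\rho(\alpha(x))[u,v]_V=-[\beta(u),\rho(x)v]_V-[\beta(v),\rho(x)u]_V$. *)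

theory Defs
  imports Complex_Main
begin

definition lin_on :: "('k::field \<Rightarrow> 'm::ab_group_add \<Rightarrow> 'm) \<Rightarrow> 'm set \<Rightarrow> ('m \<Rightarrow> 'm) \<Rightarrow> bool" where
  "lin_on scale A f \<longleftrightarrow>
     (\<forall>x\<in>A. \<forall>y\<in>A. f (x + y) = f x + f y) \<and>
     (\<forall>c. \<forall>x\<in>A. f (scale c x) = scale c (f x))"

definition sym_bilin_on :: "('k::field \<Rightarrow> 'm::ab_group_add \<Rightarrow> 'm) \<Rightarrow> 'm set \<Rightarrow> ('m \<Rightarrow> 'm \<Rightarrow> 'm) \<Rightarrow> bool" where
  "sym_bilin_on scale A b \<longleftrightarrow>
     (\<forall>x\<in>A. \<forall>y\<in>A. b x y = b y x) \<and>
     (\<forall>x\<in>A. \<forall>y\<in>A. \<forall>z\<in>A. b (x + y) z = b x z + b y z) \<and>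
     (\<forall>c. \<forall>x\<in>A. \<forall>y\<in>A. b (scale c x) y = scale c (b x y))"

definition hom_jj :: "('k::field \<Rightarrow> 'm::ab_group_add \<Rightarrow> 'm) \<Rightarrow> 'm set \<Rightarrow> ('m \<Rightarrow> 'm \<Rightarrow> 'm) \<Rightarrow> ('m \<Rightarrow> 'm) \<Rightarrow> bool" where
  "hom_jj scale A b g \<longleftrightarrow>
     module.subspace scale A \<and>
     (\<forall>x\<in>A. \<forall>y\<in>A. b x y \<in> A) \<and> (\<forall>x\<in>A. g x \<in> A) \<and>
     sym_bilin_on scale A b \<and> lin_on scale A g \<and>
     (\<forall>x\<in>A. \<forall>y\<in>A. g (b x y) = b (g x) (g y)) \<and>
     (\<forall>x\<in>A. \<forall>y\<in>A. \<forall>z\<in>A. b (g x) (b y z) + b (g y) (b z x) + b (g z) (b x y) = 0)"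

text \<open>2-cocycle (rho, theta) of (J, bJ, a) with values in (V, bV, be).
  rho x is represented as a function on the ambient space whose restriction to V is the
  endomorphism of V.\<close>
definition two_cocycle :: "('k::field \<Rightarrow> 'm::ab_group_add \<Rightarrow> 'm) \<Rightarrow>
    'm set \<Rightarrow> ('m \<Rightarrow> 'm \<Rightarrow> 'm) \<Rightarrow> ('m \<Rightarrow> 'm) \<Rightarrow>
    'm set \<Rightarrow> ('m \<Rightarrow> 'm \<Rightarrow> 'm) \<Rightarrow> ('m \<Rightarrow> 'm) \<Rightarrow>
    ('m \<Rightarrow> 'm \<Rightarrow> 'm) \<Rightarrow> ('m \<Rightarrow> 'm \<Rightarrow> 'm) \<Rightarrow> bool" where
  "two_cocycle scale J bJ a V bV be rho theta \<longleftrightarrow>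
     \<comment> \<open>rho : J -> End(V) is linear\<close>
     (\<forall>x\<in>J. \<forall>v\<in>V. rho x v \<in> V) \<and>
     (\<forall>x\<in>J. lin_on scale V (rho x)) \<and>
     (\<forall>x\<in>J. \<forall>y\<in>J. \<forall>v\<in>V. rho (x + y) v = rho x v + rho y v) \<and>
     (\<forall>c. \<forall>x\<in>J. \<forall>v\<in>V. rho (scale c x) v = scale c (rho x v)) \<and>
     \<comment> \<open>theta : J x J -> V symmetric bilinear, compatible with the twisting maps\<close>
     (\<forall>x\<in>J. \<forall>y\<in>J. theta x y \<in> V) \<and>
     sym_bilin_on scale J theta \<and>
     (\<forall>x\<in>J. \<forall>y\<in>J. be (theta x y) = theta (a x) (a y)) \<and>
     \<comment> \<open>(i)\<close>
     (\<forall>x\<in>J. \<forall>v\<in>V. rho (a x) (be v) = be (rho x v)) \<and>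
     \<comment> \<open>(ii)\<close>
     (\<forall>x\<in>J. \<forall>y\<in>J. \<forall>v\<in>V.
        rho (bJ x y) (be v) = - rho (a x) (rho y v) - rho (a y) (rho x v) - bV (theta x y) (be v)) \<and>
     \<comment> \<open>(iii)\<close>
     (\<forall>x\<in>J. \<forall>y\<in>J. \<forall>z\<in>J.
        theta (a x) (bJ y z) + theta (a y) (bJ x z) + theta (a z) (bJ x y)
        + rho (a x) (theta y z) + rho (a y) (theta x z) + rho (a z) (theta x y) = 0) \<and>
     \<comment> \<open>(iv)\<close>
     (\<forall>x\<in>J. \<forall>u\<in>V. \<forall>v\<in>V.
        rho (a x) (bV u v) = - bV (be u) (rho x v) - bV (be v) (rho x u))"

end

theory Submission
  imports Defs
begin

lemma lin4: "(a::'a::ab_group_add) + b + c + d = 0 \<Longrightarrow> c = - a - b - d"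
proof -
  assume h: "a + b + c + d = 0"
  have "c = (a + b + c + d) - a - b - d" by (simp add: algebra_simps)
  thus ?thesis using h by simp
qed

lemma lin4r: "c = - a - b - d \<Longrightarrow> (a::'a::ab_group_add) + b + c + d = 0"
  by simp

lemma lin3r: "a = - b - c \<Longrightarrow> (a::'a::ab_group_add) + b + c = 0"
  by simp

lemma lin3: "(a::'a::ab_group_add) + b + c = 0 \<Longrightarrow> a = - b - c"
proof -
  assume h: "a + b + c = 0"
  have "a = (a + b + c) - b - c" by (simp add: algebra_simps)
  thus ?thesis using h by simp
qed

theorem theorem2p3:
  fixes scale :: "'k::field \<Rightarrow> 'm::ab_group_add \<Rightarrow> 'm"
    and brM :: "'m \<Rightarrow> 'm \<Rightarrow> 'm" and alphaM :: "'m \<Rightarrow> 'm"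
    and J V :: "'m set"
    and brJ theta :: "'m \<Rightarrow> 'm \<Rightarrow> 'm"
  assumes vs: "vector_space scale"
    and fin_dim: "\<exists>B. finite_dimensional_vector_space scale B"
    and brM_bilin: "sym_bilin_on scale UNIV brM"
    and alphaM_lin: "Vector_Spaces.linear scale scale alphaM"
    and subJ: "module.subspace scale J" and subV: "module.subspace scale V"
    and direct_sum: "V \<inter> J = {0}" "\<forall>m. \<exists>v\<in>V. \<exists>j\<in>J. m = v + j"
    and inv_J: "\<forall>x\<in>J. alphaM x \<in> J" and inv_V: "\<forall>v\<in>V. alphaM v \<in> V"
    and ideal_V: "\<forall>m. \<forall>v\<in>V. brM m v \<in> V"
    and V_hjj: "hom_jj scale V brM alphaM"
    and brJ_comp: "\<forall>x\<in>J. \<forall>y\<in>J. brJ x y \<in> J"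
    and theta_comp: "\<forall>x\<in>J. \<forall>y\<in>J. theta x y \<in> V"
    and decomp: "\<forall>x\<in>J. \<forall>y\<in>J. brM x y = brJ x y + theta x y"
  shows "hom_jj scale UNIV brM alphaM \<longleftrightarrow>
           (hom_jj scale J brJ alphaM \<and>
            two_cocycle scale J brJ alphaM V brM alphaM (\<lambda>x v. brM x v) theta)"
proof -
  have md: "module scale" using vs by (simp add: module_iff_vector_space)
  have sd: "\<And>c x y. scale c (x+y) = scale c x + scale c y" using vs by (simp add: vector_space_def)
  have Jadd: "\<And>x y. x \<in> J \<Longrightarrow> y \<in> J \<Longrightarrow> x + y \<in> J" using module.subspace_add[OF md subJ] by blast
  have Vadd: "\<And>x y. x \<in> V \<Longrightarrow> y \<in> V \<Longrightarrow> x + y \<in> V" using module.subspace_add[OF md subV] by blast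
  have Jdiff: "\<And>x y. x \<in> J \<Longrightarrow> y \<in> J \<Longrightarrow> x - y \<in> J" using module.subspace_diff[OF md subJ] by blast
  have Vdiff: "\<And>x y. x \<in> V \<Longrightarrow> y \<in> V \<Longrightarrow> x - y \<in> V" using module.subspace_diff[OF md subV] by blast
  have Jsc: "\<And>c x. x \<in> J \<Longrightarrow> scale c x \<in> J" using module.subspace_scale[OF md subJ] by blast
  have Vsc: "\<And>c x. x \<in> V \<Longrightarrow> scale c x \<in> V" using module.subspace_scale[OF md subV] by blast
  have uniq: "\<And>a b a' b'. a + b = a' + b' \<Longrightarrow> a \<in> J \<Longrightarrow> b \<in> V \<Longrightarrow> a' \<in> J \<Longrightarrow> b' \<in> V \<Longrightarrow> a = a' \<and> b = b'"
  proof -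
    fix a b a' b' assume h5: "a + b = a' + b'" and h: "a \<in> J" "b \<in> V" "a' \<in> J" "b' \<in> V"
    have e: "a - a' = b' - b" using h5 by (simp add: algebra_simps)
    have "a - a' \<in> V \<inter> J" using e Jdiff[OF h(1,3)] Vdiff[OF h(4,2)] by simp
    hence "a - a' = 0" using direct_sum(1) by blast
    thus "a = a' \<and> b = b'" using e by simp
  qed
  have uniq0: "\<And>a b. a + b = 0 \<Longrightarrow> a \<in> J \<Longrightarrow> b \<in> V \<Longrightarrow> a = 0 \<and> b = 0"
  proof -
    fix a b assume h: "a + b = 0" "a \<in> J" "b \<in> V"
    then have "a + b = 0 + 0" by simp
    then show "a = 0 \<and> b = 0"
      using h(2,3) module.subspace_0[OF md subJ] module.subspace_0[OF md subV] by (rule uniq)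
  qed
  have aadd: "\<And>x y. alphaM (x + y) = alphaM x + alphaM y"
    using alphaM_lin by (simp add: Vector_Spaces.linear_iff)
  have asc: "\<And>c x. alphaM (scale c x) = scale c (alphaM x)"
    using alphaM_lin by (simp add: Vector_Spaces.linear_iff)
  have bsym: "\<And>x y. brM x y = brM y x"
    using brM_bilin unfolding sym_bilin_on_def by blast
  have badd1: "\<And>x y z. brM (x + y) z = brM x z + brM y z"
    using brM_bilin unfolding sym_bilin_on_def by blast
  have bsc1: "\<And>c x y. brM (scale c x) y = scale c (brM x y)"
    using brM_bilin unfolding sym_bilin_on_def by blast
  have badd2: "\<And>x y z. brM z (x + y) = brM z x + brM z y" using bsym badd1 by metis
  have bsc2: "\<And>c x y. brM y (scale c x) = scale c (brM y x)" using bsym bsc1 by metis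
  have Jsym: "\<And>x y. x \<in> J \<Longrightarrow> y \<in> J \<Longrightarrow> brJ x y = brJ y x \<and> theta x y = theta y x"
  proof -
    fix x y assume h: "x \<in> J" "y \<in> J"
    have "brJ x y + theta x y = brJ y x + theta y x" using decomp h bsym by metis
    thus "brJ x y = brJ y x \<and> theta x y = theta y x"
      by (rule uniq) (use h brJ_comp theta_comp in auto)
  qed
  have Jadd1: "\<And>x y z. x \<in> J \<Longrightarrow> y \<in> J \<Longrightarrow> z \<in> J \<Longrightarrow>
      brJ (x + y) z = brJ x z + brJ y z \<and> theta (x + y) z = theta x z + theta y z"
  proof -
    fix x y z assume h: "x \<in> J" "y \<in> J" "z \<in> J"
    have "brJ (x + y) z + theta (x + y) z = brM (x + y) z" using decomp h Jadd[OF h(1,2)] by simp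
    also have "\<dots> = brM x z + brM y z" by (rule badd1)
    also have "\<dots> = (brJ x z + theta x z) + (brJ y z + theta y z)" using decomp h by simp
    also have "\<dots> = (brJ x z + brJ y z) + (theta x z + theta y z)" by (simp add: algebra_simps)
    finally have "brJ (x + y) z + theta (x + y) z = (brJ x z + brJ y z) + (theta x z + theta y z)" .
    thus "brJ (x + y) z = brJ x z + brJ y z \<and> theta (x + y) z = theta x z + theta y z"
      by (rule uniq) (use h brJ_comp theta_comp Jadd Vadd in auto)
  qed
  have Jsc1: "\<And>c x y. x \<in> J \<Longrightarrow> y \<in> J \<Longrightarrow>
      brJ (scale c x) y = scale c (brJ x y) \<and> theta (scale c x) y = scale c (theta x y)"
  proof -
    fix c x y assume h: "x \<in> J" "y \<in> J"
    have "brJ (scale c x) y + theta (scale c x) y = scale c (brJ x y) + scale c (theta x y)"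
      using decomp h bsc1[of c x y] Jsc[OF h(1)] sd by simp
    thus "brJ (scale c x) y = scale c (brJ x y) \<and> theta (scale c x) y = scale c (theta x y)"
      by (rule uniq) (use h brJ_comp theta_comp Jsc Vsc in auto)
  qed
  have Jadd2: "\<And>x y z. x \<in> J \<Longrightarrow> y \<in> J \<Longrightarrow> z \<in> J \<Longrightarrow>
      brJ z (x + y) = brJ z x + brJ z y \<and> theta z (x + y) = theta z x + theta z y"
    using Jadd1 Jsym Jadd by metis
  have symJ: "sym_bilin_on scale J brJ" and symT: "sym_bilin_on scale J theta"
    unfolding sym_bilin_on_def using Jsym Jadd1 Jsc1 by blast+
  have linJ: "lin_on scale J alphaM" and linV: "\<And>x. lin_on scale V (brM x)"
    unfolding lin_on_def using aadd asc badd2 bsc2 by blast+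
  have multJ: "\<And>x y. x \<in> J \<Longrightarrow> y \<in> J \<Longrightarrow> alphaM (brM x y) = brM (alphaM x) (alphaM y) \<longleftrightarrow>
      (alphaM (brJ x y) = brJ (alphaM x) (alphaM y) \<and> alphaM (theta x y) = theta (alphaM x) (alphaM y))"
  proof -
    fix x y assume h: "x \<in> J" "y \<in> J"
    have e1: "alphaM (brM x y) = alphaM (brJ x y) + alphaM (theta x y)" using decomp h aadd by simp
    have e2: "brM (alphaM x) (alphaM y) = brJ (alphaM x) (alphaM y) + theta (alphaM x) (alphaM y)"
      using decomp h inv_J by simp
    have c: "alphaM (brJ x y) \<in> J" "alphaM (theta x y) \<in> V" "brJ (alphaM x) (alphaM y) \<in> J"
      "theta (alphaM x) (alphaM y) \<in> V" using h inv_J inv_V brJ_comp theta_comp by auto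
    show "?thesis x y" unfolding e1 e2
    proof
      assume "alphaM (brJ x y) + alphaM (theta x y) = brJ (alphaM x) (alphaM y) + theta (alphaM x) (alphaM y)"
      thus "alphaM (brJ x y) = brJ (alphaM x) (alphaM y) \<and> alphaM (theta x y) = theta (alphaM x) (alphaM y)"
        using c by (rule uniq)
    qed simp
  qed
  define Jac where "Jac x y z = brM (alphaM x) (brM y z) + brM (alphaM y) (brM z x) + brM (alphaM z) (brM x y)" for x y z
  have JJJ: "\<And>x y z. x \<in> J \<Longrightarrow> y \<in> J \<Longrightarrow> z \<in> J \<Longrightarrow> Jac x y z =
     (brJ (alphaM x) (brJ y z) + brJ (alphaM y) (brJ z x) + brJ (alphaM z) (brJ x y)) +
     (theta (alphaM x) (brJ y z) + theta (alphaM y) (brJ x z) + theta (alphaM z) (brJ x y)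
      + brM (alphaM x) (theta y z) + brM (alphaM y) (theta x z) + brM (alphaM z) (theta x y))"
  proof -
    fix x y z assume h: "x \<in> J" "y \<in> J" "z \<in> J"
    have k: "\<And>a b c. a \<in> J \<Longrightarrow> b \<in> J \<Longrightarrow> c \<in> J \<Longrightarrow> brM (alphaM a) (brM b c) =
        brJ (alphaM a) (brJ b c) + theta (alphaM a) (brJ b c) + brM (alphaM a) (theta b c)"
      using decomp badd2 inv_J brJ_comp by simp
    show "?thesis x y z" unfolding Jac_def using k[OF h(1,2,3)] k[OF h(2,3,1)] k[OF h(3,1,2)]
        Jsym[OF h(1,3)] by (simp add: algebra_simps)
  qed
  have JJV: "\<And>x y v. x \<in> J \<Longrightarrow> y \<in> J \<Longrightarrow> Jac x y v =
      brM (alphaM x) (brM y v) + brM (alphaM y) (brM x v) + brM (brJ x y) (alphaM v) + brM (theta x y) (alphaM v)"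
    unfolding Jac_def using decomp badd2 bsym by (simp add: algebra_simps)
  have JVV: "\<And>x u v. Jac x u v =
      brM (alphaM x) (brM u v) + brM (alphaM u) (brM x v) + brM (alphaM v) (brM x u)"
    unfolding Jac_def using bsym by (simp add: algebra_simps)
  have Jacsym: "\<And>x y z. Jac x y z = Jac y x z" "\<And>x y z. Jac x y z = Jac x z y"
    unfolding Jac_def using bsym by (simp_all add: algebra_simps)
  have Jacadd: "\<And>a b y z. Jac (a + b) y z = Jac a y z + Jac b y z"
    unfolding Jac_def using aadd badd1 badd2 by (simp add: algebra_simps)
  have hjj_iff: "\<And>A b. hom_jj scale A b alphaM \<longleftrightarrow> hom_jj scale A b alphaM" by simp
  show ?thesis
  proof
    assume H: "hom_jj scale UNIV brM alphaM"
    have mult: "\<And>x y. alphaM (brM x y) = brM (alphaM x) (alphaM y)" using H by (simp add: hom_jj_def)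
    have jac: "\<And>x y z. Jac x y z = 0" using H by (simp add: hom_jj_def Jac_def)
    have jjj: "\<And>x y z. x \<in> J \<Longrightarrow> y \<in> J \<Longrightarrow> z \<in> J \<Longrightarrow>
     (brJ (alphaM x) (brJ y z) + brJ (alphaM y) (brJ z x) + brJ (alphaM z) (brJ x y)) = 0 \<and>
     (theta (alphaM x) (brJ y z) + theta (alphaM y) (brJ x z) + theta (alphaM z) (brJ x y)
      + brM (alphaM x) (theta y z) + brM (alphaM y) (theta x z) + brM (alphaM z) (theta x y)) = 0"
    proof -
      fix x y z assume h: "x \<in> J" "y \<in> J" "z \<in> J"
      show "?thesis x y z"
      proof (rule uniq0)
        show "brJ (alphaM x) (brJ y z) + brJ (alphaM y) (brJ z x) + brJ (alphaM z) (brJ x y) \<in> J"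
          using h inv_J brJ_comp Jadd by simp
        show "theta (alphaM x) (brJ y z) + theta (alphaM y) (brJ x z) + theta (alphaM z) (brJ x y)
          + brM (alphaM x) (theta y z) + brM (alphaM y) (theta x z) + brM (alphaM z) (theta x y) \<in> V"
          using h inv_J brJ_comp Vadd theta_comp ideal_V by simp
        show "brJ (alphaM x) (brJ y z) + brJ (alphaM y) (brJ z x) + brJ (alphaM z) (brJ x y) +
          (theta (alphaM x) (brJ y z) + theta (alphaM y) (brJ x z) + theta (alphaM z) (brJ x y)
          + brM (alphaM x) (theta y z) + brM (alphaM y) (theta x z) + brM (alphaM z) (theta x y)) = 0"
          using JJJ[OF h] jac by simp
      qed
    qed
    have "hom_jj scale J brJ alphaM"
      unfolding hom_jj_def using subJ brJ_comp inv_J symJ linJ multJ mult jjj by blast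
    moreover have "two_cocycle scale J brJ alphaM V brM alphaM (\<lambda>x v. brM x v) theta"
      unfolding two_cocycle_def
    proof (intro conjI)
      show "\<forall>x\<in>J. \<forall>y\<in>J. \<forall>v\<in>V. brM (brJ x y) (alphaM v) =
         - brM (alphaM x) (brM y v) - brM (alphaM y) (brM x v) - brM (theta x y) (alphaM v)"
      proof (intro ballI)
        fix x y v assume h: "x \<in> J" "y \<in> J" "v \<in> V"
        have "Jac x y v = 0" by (rule jac)
        thus "brM (brJ x y) (alphaM v) =
         - brM (alphaM x) (brM y v) - brM (alphaM y) (brM x v) - brM (theta x y) (alphaM v)"
          unfolding JJV[OF h(1,2)] by (rule lin4)
      qed
      show "\<forall>x\<in>J. \<forall>u\<in>V. \<forall>v\<in>V. brM (alphaM x) (brM u v) =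
         - brM (alphaM u) (brM x v) - brM (alphaM v) (brM x u)"
      proof (intro ballI)
        fix x u v assume h: "x \<in> J" "u \<in> V" "v \<in> V"
        have "Jac x u v = 0" by (rule jac)
        thus "brM (alphaM x) (brM u v) = - brM (alphaM u) (brM x v) - brM (alphaM v) (brM x u)"
          unfolding JVV by (rule lin3)
      qed
    qed (use ideal_V linV badd1 bsc1 theta_comp symT multJ mult jjj in auto)
    ultimately show "hom_jj scale J brJ alphaM \<and>
            two_cocycle scale J brJ alphaM V brM alphaM (\<lambda>x v. brM x v) theta" by blast
  next
    assume H: "hom_jj scale J brJ alphaM \<and>
            two_cocycle scale J brJ alphaM V brM alphaM (\<lambda>x v. brM x v) theta"
    have HJ: "hom_jj scale J brJ alphaM" and HC: "two_cocycle scale J brJ alphaM V brM alphaM (\<lambda>x v. brM x v) theta"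
      using H by auto
    have multJJ: "\<And>x y. x \<in> J \<Longrightarrow> y \<in> J \<Longrightarrow> alphaM (brJ x y) = brJ (alphaM x) (alphaM y)"
      using HJ unfolding hom_jj_def by blast
    have jacJ: "\<And>x y z. x \<in> J \<Longrightarrow> y \<in> J \<Longrightarrow> z \<in> J \<Longrightarrow>
       brJ (alphaM x) (brJ y z) + brJ (alphaM y) (brJ z x) + brJ (alphaM z) (brJ x y) = 0"
      using HJ unfolding hom_jj_def by blast
    have thmul: "\<And>x y. x \<in> J \<Longrightarrow> y \<in> J \<Longrightarrow> alphaM (theta x y) = theta (alphaM x) (alphaM y)"
      using HC unfolding two_cocycle_def by blast
    have ci: "\<And>x v. x \<in> J \<Longrightarrow> v \<in> V \<Longrightarrow> brM (alphaM x) (alphaM v) = alphaM (brM x v)"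
      using HC unfolding two_cocycle_def by blast
    have cii: "\<And>x y v. x \<in> J \<Longrightarrow> y \<in> J \<Longrightarrow> v \<in> V \<Longrightarrow> brM (brJ x y) (alphaM v) =
         - brM (alphaM x) (brM y v) - brM (alphaM y) (brM x v) - brM (theta x y) (alphaM v)"
      using HC unfolding two_cocycle_def by blast
    have ciii: "\<And>x y z. x \<in> J \<Longrightarrow> y \<in> J \<Longrightarrow> z \<in> J \<Longrightarrow>
        theta (alphaM x) (brJ y z) + theta (alphaM y) (brJ x z) + theta (alphaM z) (brJ x y)
        + brM (alphaM x) (theta y z) + brM (alphaM y) (theta x z) + brM (alphaM z) (theta x y) = 0"
      using HC unfolding two_cocycle_def by blast
    have civ: "\<And>x u v. x \<in> J \<Longrightarrow> u \<in> V \<Longrightarrow> v \<in> V \<Longrightarrow>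
        brM (alphaM x) (brM u v) = - brM (alphaM u) (brM x v) - brM (alphaM v) (brM x u)"
      using HC unfolding two_cocycle_def by blast
    have multV: "\<And>x y. x \<in> V \<Longrightarrow> y \<in> V \<Longrightarrow> alphaM (brM x y) = brM (alphaM x) (alphaM y)"
      using V_hjj unfolding hom_jj_def by blast
    have jacV: "\<And>x y z. x \<in> V \<Longrightarrow> y \<in> V \<Longrightarrow> z \<in> V \<Longrightarrow> Jac x y z = 0"
      using V_hjj unfolding hom_jj_def Jac_def by blast
    have m0: "\<And>x y. x \<in> V \<union> J \<Longrightarrow> y \<in> V \<union> J \<Longrightarrow> alphaM (brM x y) = brM (alphaM x) (alphaM y)"
    proof -
      fix x y assume hx: "x \<in> V \<union> J" and hy: "y \<in> V \<union> J"
      have jj: "alphaM (brM a b) = brM (alphaM a) (alphaM b)" if "a \<in> J" "b \<in> J" for a b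
        using multJ[OF that] multJJ[OF that] thmul[OF that] by blast
      have jv: "alphaM (brM a b) = brM (alphaM a) (alphaM b)" if "a \<in> J" "b \<in> V" for a b
        using ci[OF that] by simp
      show "alphaM (brM x y) = brM (alphaM x) (alphaM y)"
        using hx hy jj jv multV bsym by (metis UnE)
    qed
    have m1: "\<And>x y. y \<in> V \<union> J \<Longrightarrow> alphaM (brM x y) = brM (alphaM x) (alphaM y)"
    proof -
      fix x y assume hy: "y \<in> V \<union> J"
      obtain v j where vj: "v \<in> V" "j \<in> J" "x = v + j" using direct_sum(2) by blast
      show "alphaM (brM x y) = brM (alphaM x) (alphaM y)"
        unfolding vj(3) badd1 aadd using m0 vj hy by simp
    qed
    have mult: "\<And>x y. alphaM (brM x y) = brM (alphaM x) (alphaM y)"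
    proof -
      fix x y
      obtain v j where vj: "v \<in> V" "j \<in> J" "y = v + j" using direct_sum(2) by blast
      show "alphaM (brM x y) = brM (alphaM x) (alphaM y)"
        unfolding vj(3) badd2 aadd using m1 vj by simp
    qed
    have jJJJ: "\<And>x y z. x \<in> J \<Longrightarrow> y \<in> J \<Longrightarrow> z \<in> J \<Longrightarrow> Jac x y z = 0"
      using JJJ jacJ ciii by simp
    have jJJV: "\<And>x y z. x \<in> J \<Longrightarrow> y \<in> J \<Longrightarrow> z \<in> V \<Longrightarrow> Jac x y z = 0"
      using JJV cii lin4r by metis
    have jJVV: "\<And>x y z. x \<in> J \<Longrightarrow> y \<in> V \<Longrightarrow> z \<in> V \<Longrightarrow> Jac x y z = 0"
      using JVV civ lin3r by metis
    have j0: "\<And>x y z. x \<in> V \<union> J \<Longrightarrow> y \<in> V \<union> J \<Longrightarrow> z \<in> V \<union> J \<Longrightarrow> Jac x y z = 0"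
      apply (elim UnE)
      using jacV jJJJ jJJV jJVV Jacsym by metis+
    have j1: "\<And>x y z. y \<in> V \<union> J \<Longrightarrow> z \<in> V \<union> J \<Longrightarrow> Jac x y z = 0"
    proof -
      fix x y z assume hy: "y \<in> V \<union> J" and hz: "z \<in> V \<union> J"
      obtain v j where vj: "v \<in> V" "j \<in> J" "x = v + j" using direct_sum(2) by blast
      show "Jac x y z = 0" unfolding vj(3) Jacadd using j0 vj hy hz by simp
    qed
    have j2: "\<And>x y z. z \<in> V \<union> J \<Longrightarrow> Jac x y z = 0"
    proof -
      fix x y z assume hz: "z \<in> V \<union> J"
      obtain v j where vj: "v \<in> V" "j \<in> J" "y = v + j" using direct_sum(2) by blast
      have "Jac x y z = Jac y x z" by (rule Jacsym)
      also have "\<dots> = Jac x v z + Jac x j z" unfolding vj(3) Jacadd using Jacsym by metis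
      also have "\<dots> = 0" using j1 vj hz by simp
      finally show "Jac x y z = 0" .
    qed
    have jac: "\<And>x y z. Jac x y z = 0"
    proof -
      fix x y z
      obtain v j where vj: "v \<in> V" "j \<in> J" "z = v + j" using direct_sum(2) by blast
      have "Jac x y z = Jac z x y" using Jacsym by metis
      also have "\<dots> = Jac x y v + Jac x y j" unfolding vj(3) Jacadd using Jacsym by metis
      also have "\<dots> = 0" using j2 vj by simp
      finally show "Jac x y z = 0" .
    qed
    show "hom_jj scale UNIV brM alphaM"
      unfolding hom_jj_def
      using module.subspace_UNIV[OF md] brM_bilin aadd asc mult jac
      by (auto simp: lin_on_def Jac_def)
  qed
qed

end
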